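(* Suppose $(\alpha_0,\dots,\alpha_4)\in\mathbb{R}^5$ satisfies $0\le\alpha_i\le1$ for all $i$ and $\sum_i\alpha_i=1$. If $A_4(\alpha_0,\dots,\alpha_4)$ has a rational solution $(f_0,\dots,f_4)$, then $h_{\infty,-1}\ge0$, where $h_{\infty,-1}$ is the coefficient of $t^{-1}$ in the Laurent expansion at $t=\infty$ of $\hat H=f_0f_1f_2+f_1f_2f_3+f_2f_3f_4+f_3f_4f_0+f_4f_0f_1$.
   Context: The $A_4^{(1)}$ Painlevé equation $A_4(\alpha_0,\dots,\alpha_4)$ is the system for five functions $f_0,\dots,f_4$ of $t$ (indices in $\mathbb{Z}/5\mathbb{Z}$, ${}'=d/dt$): $f_j'=f_j(f_{j+1}-f_{j+2}+f_{j+3}-f_{j+4})+\alpha_j$ ($j=0,\dots,4$), $f_0+\dots+f_4=t$. A rational solution is a tuple of rational functions satisfying it. *)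

theory Defs
  imports "HOL-Analysis.Analysis" "HOL-Computational_Algebra.Polynomial"
begin

definition rational_fun :: "(complex \<Rightarrow> complex) \<Rightarrow> bool" where
  "rational_fun f \<longleftrightarrow> (\<exists>p q. q \<noteq> 0 \<and> (\<forall>t. poly q t \<noteq> 0 \<longrightarrow> f t = poly p t / poly q t))"

definition A4_rational_solution :: "(nat \<Rightarrow> real) \<Rightarrow> (nat \<Rightarrow> complex \<Rightarrow> complex) \<Rightarrow> bool" where
  "A4_rational_solution \<alpha> f \<longleftrightarrow>
     (\<forall>j<5. rational_fun (f j)) \<and>
     (\<exists>F. finite F \<and> (\<forall>t. t \<notin> F \<longrightarrow>
        (\<forall>j<5. (f j has_field_derivative
            (f j t * (f ((j+1) mod 5) t - f ((j+2) mod 5) t + f ((j+3) mod 5) t - f ((j+4) mod 5) t)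
             + complex_of_real (\<alpha> j))) (at t)) \<and>
        (\<Sum>j<5. f j t) = t))"

definition A4_H :: "(nat \<Rightarrow> complex \<Rightarrow> complex) \<Rightarrow> complex \<Rightarrow> complex" where
  "A4_H f t = (\<Sum>j<5. f j t * f ((j+1) mod 5) t * f ((j+2) mod 5) t)"

text \<open>Coefficient of t^(-1) in the Laurent expansion at infinity of a rational function R:
  R(t) = P(t) + c/t + O(t^(-2)) with P polynomial (the polynomial part), so c is the unique
  limit of t (R t - P t) as t tends to infinity.\<close>
definition laurent_inf_coeff_m1 :: "(complex \<Rightarrow> complex) \<Rightarrow> complex" where
  "laurent_inf_coeff_m1 R = (THE c. \<exists>p. ((\<lambda>t. t * (R t - poly p t)) \<longlongrightarrow> c) at_infinity)"

end

theory Submission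
  imports Defs "HOL-Complex_Analysis.Complex_Analysis"
begin



lemma fls_mult_low:
  fixes f g :: "'a::{comm_ring_1} fls"
  assumes "a \<le> fls_subdegree f" "b \<le> fls_subdegree g"
  shows "fls_nth (f*g) (a+b) = fls_nth f a * fls_nth g b"
proof (cases "a = fls_subdegree f \<and> b = fls_subdegree g")
  case True then show ?thesis by simp
next
  case False
  then have "a + b < fls_subdegree f + fls_subdegree g" using assms by auto
  then have "fls_nth (f*g) (a+b) = 0" by (rule fls_times_nth_eq0)
  moreover have "fls_nth f a = 0 \<or> fls_nth g b = 0" using False assms by auto
  ultimately show ?thesis by auto
qed

lemma derivH:
  fixes y0 y1 y2 y3 y4 c0 c1 c2 c3 c4 :: "complex fls"
  assumes "fls_deriv y0 = y0 * (y1 - y2 + y3 - y4) + c0"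
    "fls_deriv y1 = y1 * (y2 - y3 + y4 - y0) + c1"
    "fls_deriv y2 = y2 * (y3 - y4 + y0 - y1) + c2"
    "fls_deriv y3 = y3 * (y4 - y0 + y1 - y2) + c3"
    "fls_deriv y4 = y4 * (y0 - y1 + y2 - y3) + c4"
  shows "fls_deriv (y0*y1*y2 + y1*y2*y3 + y2*y3*y4 + y3*y4*y0 + y4*y0*y1) =
     c0 * (y1*y2 + y1*y4 + y3*y4) + c1 * (y2*y3 + y2*y0 + y4*y0) + c2 * (y3*y4 + y3*y1 + y0*y1)
   + c3 * (y4*y0 + y4*y2 + y1*y2) + c4 * (y0*y1 + y0*y3 + y2*y3)"
  by (simp add: assms) (simp add: algebra_simps)


lemma L1: fixes u0 u1 u2 u3 u4 :: complex
 assumes "u0 * (u1 - u2 + u3 - u4) = 0" "u1 * (u2 - u3 + u4 - u0) = 0"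
   "u2 * (u3 - u4 + u0 - u1) = 0" "u3 * (u4 - u0 + u1 - u2) = 0" "u4 * (u0 - u1 + u2 - u3) = 0"
   "u0+u1+u2+u3+u4 = 0"
 shows "u0 = 0 \<and> u1 = 0 \<and> u2 = 0 \<and> u3 = 0 \<and> u4 = 0"
proof -
  have s: "Re u0 + Re u1 + Re u2 + Re u3 + Re u4 = 0" "Im u0 + Im u1 + Im u2 + Im u3 + Im u4 = 0"
    using assms(6) by (simp_all add: complex_eq_iff)
  from assms(1-5) have "(u0 = 0 \<or> u1 - u2 + u3 - u4 = 0) \<and> (u1 = 0 \<or> u2 - u3 + u4 - u0 = 0) \<and>
    (u2 = 0 \<or> u3 - u4 + u0 - u1 = 0) \<and> (u3 = 0 \<or> u4 - u0 + u1 - u2 = 0) \<and> (u4 = 0 \<or> u0 - u1 + u2 - u3 = 0)"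
    by simp
  then show ?thesis using s
    by (elim conjE disjE) (simp_all add: complex_eq_iff; linarith)+
qed

lemma L2: fixes r0 r1 r2 r3 r4 :: complex
  assumes "r0 * (1 + r1 - r2 + r3 - r4) = 0" "r1 * (1 + r2 - r3 + r4 - r0) = 0" "r2 * (1 + r3 - r4 + r0 - r1) = 0" "r3 * (1 + r4 - r0 + r1 - r2) = 0" "r4 * (1 + r0 - r1 + r2 - r3) = 0"
    "r0 + r1 + r2 + r3 + r4 = 0"
  shows "\<forall>P \<in> {r1 * r2 + r1 * r4 + r3 * r4, r2 * r3 + r2 * r0 + r4 * r0, r3 * r4 + r3 * r1 + r0 * r1, r4 * r0 + r4 * r2 + r1 * r2, r0 * r1 + r0 * r3 + r2 * r3}. Im P = 0 \<and> Re P \<le> 0"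
proof -
  have s: "Re r0 + Re r1 + Re r2 + Re r3 + Re r4 = 0" "Im r0 + Im r1 + Im r2 + Im r3 + Im r4 = 0"
    using assms(6) by (simp_all add: complex_eq_iff)
  have d: "r0 = 0 \<or> 1 + r1 - r2 + r3 - r4 = 0" "r1 = 0 \<or> 1 + r2 - r3 + r4 - r0 = 0" "r2 = 0 \<or> 1 + r3 - r4 + r0 - r1 = 0" "r3 = 0 \<or> 1 + r4 - r0 + r1 - r2 = 0" "r4 = 0 \<or> 1 + r0 - r1 + r2 - r3 = 0"
    using assms(1-5) by simp_all
  have c00000: "?thesis" if "r0 = 0" "r1 = 0" "r2 = 0" "r3 = 0" "r4 = 0"
  proof -
    have e0: "r0 = (0)" using that s by (simp add: complex_eq_iff; linarith)
    have e1: "r1 = (0)" using that s by (simp add: complex_eq_iff; linarith)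
    have e2: "r2 = (0)" using that s by (simp add: complex_eq_iff; linarith)
    have e3: "r3 = (0)" using that s by (simp add: complex_eq_iff; linarith)
    have e4: "r4 = (0)" using that s by (simp add: complex_eq_iff; linarith)
    show ?thesis by (simp add: e0 e1 e2 e3 e4)
  qed
  have c00001: "?thesis" if "r0 = 0" "r1 = 0" "r2 = 0" "r3 = 0" "1 + r0 - r1 + r2 - r3 = 0"
  proof -
    have False using that s by (simp_all add: complex_eq_iff; linarith)
    then show ?thesis by simp
  qed
  have c00010: "?thesis" if "r0 = 0" "r1 = 0" "r2 = 0" "1 + r4 - r0 + r1 - r2 = 0" "r4 = 0"
  proof -
    have False using that s by (simp_all add: complex_eq_iff; linarith)
    then show ?thesis by simp
  qed
  have c00011: "?thesis" if "r0 = 0" "r1 = 0" "r2 = 0" "1 + r4 - r0 + r1 - r2 = 0" "1 + r0 - r1 + r2 - r3 = 0"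
  proof -
    have e0: "r0 = (0)" using that s by (simp add: complex_eq_iff; linarith)
    have e1: "r1 = (0)" using that s by (simp add: complex_eq_iff; linarith)
    have e2: "r2 = (0)" using that s by (simp add: complex_eq_iff; linarith)
    have e3: "r3 = (1)" using that s by (simp add: complex_eq_iff; linarith)
    have e4: "r4 = (-1)" using that s by (simp add: complex_eq_iff; linarith)
    show ?thesis by (simp add: e0 e1 e2 e3 e4)
  qed
  have c00100: "?thesis" if "r0 = 0" "r1 = 0" "1 + r3 - r4 + r0 - r1 = 0" "r3 = 0" "r4 = 0"
  proof -
    have False using that s by (simp_all add: complex_eq_iff; linarith)
    then show ?thesis by simp
  qed
  have c00101: "?thesis" if "r0 = 0" "r1 = 0" "1 + r3 - r4 + r0 - r1 = 0" "r3 = 0" "1 + r0 - r1 + r2 - r3 = 0"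
  proof -
    have e0: "r0 = (0)" using that s by (simp add: complex_eq_iff; linarith)
    have e1: "r1 = (0)" using that s by (simp add: complex_eq_iff; linarith)
    have e2: "r2 = (-1)" using that s by (simp add: complex_eq_iff; linarith)
    have e3: "r3 = (0)" using that s by (simp add: complex_eq_iff; linarith)
    have e4: "r4 = (1)" using that s by (simp add: complex_eq_iff; linarith)
    show ?thesis by (simp add: e0 e1 e2 e3 e4)
  qed
  have c00110: "?thesis" if "r0 = 0" "r1 = 0" "1 + r3 - r4 + r0 - r1 = 0" "1 + r4 - r0 + r1 - r2 = 0" "r4 = 0"
  proof -
    have e0: "r0 = (0)" using that s by (simp add: complex_eq_iff; linarith)
    have e1: "r1 = (0)" using that s by (simp add: complex_eq_iff; linarith)
    have e2: "r2 = (1)" using that s by (simp add: complex_eq_iff; linarith)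
    have e3: "r3 = (-1)" using that s by (simp add: complex_eq_iff; linarith)
    have e4: "r4 = (0)" using that s by (simp add: complex_eq_iff; linarith)
    show ?thesis by (simp add: e0 e1 e2 e3 e4)
  qed
  have c00111: "?thesis" if "r0 = 0" "r1 = 0" "1 + r3 - r4 + r0 - r1 = 0" "1 + r4 - r0 + r1 - r2 = 0" "1 + r0 - r1 + r2 - r3 = 0"
  proof -
    have False using that s by (simp_all add: complex_eq_iff; linarith)
    then show ?thesis by simp
  qed
  have c01000: "?thesis" if "r0 = 0" "1 + r2 - r3 + r4 - r0 = 0" "r2 = 0" "r3 = 0" "r4 = 0"
  proof -
    have False using that s by (simp_all add: complex_eq_iff; linarith)
    then show ?thesis by simp
  qed
  have c01001: "?thesis" if "r0 = 0" "1 + r2 - r3 + r4 - r0 = 0" "r2 = 0" "r3 = 0" "1 + r0 - r1 + r2 - r3 = 0"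
  proof -
    have e0: "r0 = (0)" using that s by (simp add: complex_eq_iff; linarith)
    have e1: "r1 = (1)" using that s by (simp add: complex_eq_iff; linarith)
    have e2: "r2 = (0)" using that s by (simp add: complex_eq_iff; linarith)
    have e3: "r3 = (0)" using that s by (simp add: complex_eq_iff; linarith)
    have e4: "r4 = (-1)" using that s by (simp add: complex_eq_iff; linarith)
    show ?thesis by (simp add: e0 e1 e2 e3 e4)
  qed
  have c01010: "?thesis" if "r0 = 0" "1 + r2 - r3 + r4 - r0 = 0" "r2 = 0" "1 + r4 - r0 + r1 - r2 = 0" "r4 = 0"
  proof -
    have e0: "r0 = (0)" using that s by (simp add: complex_eq_iff; linarith)
    have e1: "r1 = (-1)" using that s by (simp add: complex_eq_iff; linarith)
    have e2: "r2 = (0)" using that s by (simp add: complex_eq_iff; linarith)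
    have e3: "r3 = (1)" using that s by (simp add: complex_eq_iff; linarith)
    have e4: "r4 = (0)" using that s by (simp add: complex_eq_iff; linarith)
    show ?thesis by (simp add: e0 e1 e2 e3 e4)
  qed
  have c01011: "?thesis" if "r0 = 0" "1 + r2 - r3 + r4 - r0 = 0" "r2 = 0" "1 + r4 - r0 + r1 - r2 = 0" "1 + r0 - r1 + r2 - r3 = 0"
  proof -
    have False using that s by (simp_all add: complex_eq_iff; linarith)
    then show ?thesis by simp
  qed
  have c01100: "?thesis" if "r0 = 0" "1 + r2 - r3 + r4 - r0 = 0" "1 + r3 - r4 + r0 - r1 = 0" "r3 = 0" "r4 = 0"
  proof -
    have e0: "r0 = (0)" using that s by (simp add: complex_eq_iff; linarith)
    have e1: "r1 = (1)" using that s by (simp add: complex_eq_iff; linarith)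
    have e2: "r2 = (-1)" using that s by (simp add: complex_eq_iff; linarith)
    have e3: "r3 = (0)" using that s by (simp add: complex_eq_iff; linarith)
    have e4: "r4 = (0)" using that s by (simp add: complex_eq_iff; linarith)
    show ?thesis by (simp add: e0 e1 e2 e3 e4)
  qed
  have c01101: "?thesis" if "r0 = 0" "1 + r2 - r3 + r4 - r0 = 0" "1 + r3 - r4 + r0 - r1 = 0" "r3 = 0" "1 + r0 - r1 + r2 - r3 = 0"
  proof -
    have False using that s by (simp_all add: complex_eq_iff; linarith)
    then show ?thesis by simp
  qed
  have c01110: "?thesis" if "r0 = 0" "1 + r2 - r3 + r4 - r0 = 0" "1 + r3 - r4 + r0 - r1 = 0" "1 + r4 - r0 + r1 - r2 = 0" "r4 = 0"
  proof -
    have False using that s by (simp_all add: complex_eq_iff; linarith)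
    then show ?thesis by simp
  qed
  have c01111: "?thesis" if "r0 = 0" "1 + r2 - r3 + r4 - r0 = 0" "1 + r3 - r4 + r0 - r1 = 0" "1 + r4 - r0 + r1 - r2 = 0" "1 + r0 - r1 + r2 - r3 = 0"
  proof -
    have e0: "r0 = (0)" using that s by (simp add: complex_eq_iff; linarith)
    have e1: "r1 = (3)" using that s by (simp add: complex_eq_iff; linarith)
    have e2: "r2 = (1)" using that s by (simp add: complex_eq_iff; linarith)
    have e3: "r3 = (-1)" using that s by (simp add: complex_eq_iff; linarith)
    have e4: "r4 = (-3)" using that s by (simp add: complex_eq_iff; linarith)
    show ?thesis by (simp add: e0 e1 e2 e3 e4)
  qed
  have c10000: "?thesis" if "1 + r1 - r2 + r3 - r4 = 0" "r1 = 0" "r2 = 0" "r3 = 0" "r4 = 0"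
  proof -
    have False using that s by (simp_all add: complex_eq_iff; linarith)
    then show ?thesis by simp
  qed
  have c10001: "?thesis" if "1 + r1 - r2 + r3 - r4 = 0" "r1 = 0" "r2 = 0" "r3 = 0" "1 + r0 - r1 + r2 - r3 = 0"
  proof -
    have e0: "r0 = (-1)" using that s by (simp add: complex_eq_iff; linarith)
    have e1: "r1 = (0)" using that s by (simp add: complex_eq_iff; linarith)
    have e2: "r2 = (0)" using that s by (simp add: complex_eq_iff; linarith)
    have e3: "r3 = (0)" using that s by (simp add: complex_eq_iff; linarith)
    have e4: "r4 = (1)" using that s by (simp add: complex_eq_iff; linarith)
    show ?thesis by (simp add: e0 e1 e2 e3 e4)
  qed
  have c10010: "?thesis" if "1 + r1 - r2 + r3 - r4 = 0" "r1 = 0" "r2 = 0" "1 + r4 - r0 + r1 - r2 = 0" "r4 = 0"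
  proof -
    have e0: "r0 = (1)" using that s by (simp add: complex_eq_iff; linarith)
    have e1: "r1 = (0)" using that s by (simp add: complex_eq_iff; linarith)
    have e2: "r2 = (0)" using that s by (simp add: complex_eq_iff; linarith)
    have e3: "r3 = (-1)" using that s by (simp add: complex_eq_iff; linarith)
    have e4: "r4 = (0)" using that s by (simp add: complex_eq_iff; linarith)
    show ?thesis by (simp add: e0 e1 e2 e3 e4)
  qed
  have c10011: "?thesis" if "1 + r1 - r2 + r3 - r4 = 0" "r1 = 0" "r2 = 0" "1 + r4 - r0 + r1 - r2 = 0" "1 + r0 - r1 + r2 - r3 = 0"
  proof -
    have False using that s by (simp_all add: complex_eq_iff; linarith)
    then show ?thesis by simp
  qed
  have c10100: "?thesis" if "1 + r1 - r2 + r3 - r4 = 0" "r1 = 0" "1 + r3 - r4 + r0 - r1 = 0" "r3 = 0" "r4 = 0"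
  proof -
    have e0: "r0 = (-1)" using that s by (simp add: complex_eq_iff; linarith)
    have e1: "r1 = (0)" using that s by (simp add: complex_eq_iff; linarith)
    have e2: "r2 = (1)" using that s by (simp add: complex_eq_iff; linarith)
    have e3: "r3 = (0)" using that s by (simp add: complex_eq_iff; linarith)
    have e4: "r4 = (0)" using that s by (simp add: complex_eq_iff; linarith)
    show ?thesis by (simp add: e0 e1 e2 e3 e4)
  qed
  have c10101: "?thesis" if "1 + r1 - r2 + r3 - r4 = 0" "r1 = 0" "1 + r3 - r4 + r0 - r1 = 0" "r3 = 0" "1 + r0 - r1 + r2 - r3 = 0"
  proof -
    have False using that s by (simp_all add: complex_eq_iff; linarith)
    then show ?thesis by simp
  qed
  have c10110: "?thesis" if "1 + r1 - r2 + r3 - r4 = 0" "r1 = 0" "1 + r3 - r4 + r0 - r1 = 0" "1 + r4 - r0 + r1 - r2 = 0" "r4 = 0"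
  proof -
    have False using that s by (simp_all add: complex_eq_iff; linarith)
    then show ?thesis by simp
  qed
  have c10111: "?thesis" if "1 + r1 - r2 + r3 - r4 = 0" "r1 = 0" "1 + r3 - r4 + r0 - r1 = 0" "1 + r4 - r0 + r1 - r2 = 0" "1 + r0 - r1 + r2 - r3 = 0"
  proof -
    have e0: "r0 = (-3)" using that s by (simp add: complex_eq_iff; linarith)
    have e1: "r1 = (0)" using that s by (simp add: complex_eq_iff; linarith)
    have e2: "r2 = (3)" using that s by (simp add: complex_eq_iff; linarith)
    have e3: "r3 = (1)" using that s by (simp add: complex_eq_iff; linarith)
    have e4: "r4 = (-1)" using that s by (simp add: complex_eq_iff; linarith)
    show ?thesis by (simp add: e0 e1 e2 e3 e4)
  qed
  have c11000: "?thesis" if "1 + r1 - r2 + r3 - r4 = 0" "1 + r2 - r3 + r4 - r0 = 0" "r2 = 0" "r3 = 0" "r4 = 0"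
  proof -
    have e0: "r0 = (1)" using that s by (simp add: complex_eq_iff; linarith)
    have e1: "r1 = (-1)" using that s by (simp add: complex_eq_iff; linarith)
    have e2: "r2 = (0)" using that s by (simp add: complex_eq_iff; linarith)
    have e3: "r3 = (0)" using that s by (simp add: complex_eq_iff; linarith)
    have e4: "r4 = (0)" using that s by (simp add: complex_eq_iff; linarith)
    show ?thesis by (simp add: e0 e1 e2 e3 e4)
  qed
  have c11001: "?thesis" if "1 + r1 - r2 + r3 - r4 = 0" "1 + r2 - r3 + r4 - r0 = 0" "r2 = 0" "r3 = 0" "1 + r0 - r1 + r2 - r3 = 0"
  proof -
    have False using that s by (simp_all add: complex_eq_iff; linarith)
    then show ?thesis by simp
  qed
  have c11010: "?thesis" if "1 + r1 - r2 + r3 - r4 = 0" "1 + r2 - r3 + r4 - r0 = 0" "r2 = 0" "1 + r4 - r0 + r1 - r2 = 0" "r4 = 0"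
  proof -
    have False using that s by (simp_all add: complex_eq_iff; linarith)
    then show ?thesis by simp
  qed
  have c11011: "?thesis" if "1 + r1 - r2 + r3 - r4 = 0" "1 + r2 - r3 + r4 - r0 = 0" "r2 = 0" "1 + r4 - r0 + r1 - r2 = 0" "1 + r0 - r1 + r2 - r3 = 0"
  proof -
    have e0: "r0 = (-1)" using that s by (simp add: complex_eq_iff; linarith)
    have e1: "r1 = (-3)" using that s by (simp add: complex_eq_iff; linarith)
    have e2: "r2 = (0)" using that s by (simp add: complex_eq_iff; linarith)
    have e3: "r3 = (3)" using that s by (simp add: complex_eq_iff; linarith)
    have e4: "r4 = (1)" using that s by (simp add: complex_eq_iff; linarith)
    show ?thesis by (simp add: e0 e1 e2 e3 e4)
  qed
  have c11100: "?thesis" if "1 + r1 - r2 + r3 - r4 = 0" "1 + r2 - r3 + r4 - r0 = 0" "1 + r3 - r4 + r0 - r1 = 0" "r3 = 0" "r4 = 0"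
  proof -
    have False using that s by (simp_all add: complex_eq_iff; linarith)
    then show ?thesis by simp
  qed
  have c11101: "?thesis" if "1 + r1 - r2 + r3 - r4 = 0" "1 + r2 - r3 + r4 - r0 = 0" "1 + r3 - r4 + r0 - r1 = 0" "r3 = 0" "1 + r0 - r1 + r2 - r3 = 0"
  proof -
    have e0: "r0 = (1)" using that s by (simp add: complex_eq_iff; linarith)
    have e1: "r1 = (-1)" using that s by (simp add: complex_eq_iff; linarith)
    have e2: "r2 = (-3)" using that s by (simp add: complex_eq_iff; linarith)
    have e3: "r3 = (0)" using that s by (simp add: complex_eq_iff; linarith)
    have e4: "r4 = (3)" using that s by (simp add: complex_eq_iff; linarith)
    show ?thesis by (simp add: e0 e1 e2 e3 e4)
  qed
  have c11110: "?thesis" if "1 + r1 - r2 + r3 - r4 = 0" "1 + r2 - r3 + r4 - r0 = 0" "1 + r3 - r4 + r0 - r1 = 0" "1 + r4 - r0 + r1 - r2 = 0" "r4 = 0"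
  proof -
    have e0: "r0 = (3)" using that s by (simp add: complex_eq_iff; linarith)
    have e1: "r1 = (1)" using that s by (simp add: complex_eq_iff; linarith)
    have e2: "r2 = (-1)" using that s by (simp add: complex_eq_iff; linarith)
    have e3: "r3 = (-3)" using that s by (simp add: complex_eq_iff; linarith)
    have e4: "r4 = (0)" using that s by (simp add: complex_eq_iff; linarith)
    show ?thesis by (simp add: e0 e1 e2 e3 e4)
  qed
  have c11111: "?thesis" if "1 + r1 - r2 + r3 - r4 = 0" "1 + r2 - r3 + r4 - r0 = 0" "1 + r3 - r4 + r0 - r1 = 0" "1 + r4 - r0 + r1 - r2 = 0" "1 + r0 - r1 + r2 - r3 = 0"
  proof -
    have False using that s by (simp_all add: complex_eq_iff; linarith)
    then show ?thesis by simp
  qed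
  show ?thesis
  proof (rule disjE[OF d(1)])
    assume a0: "r0 = 0"
    show ?thesis
      proof (rule disjE[OF d(2)])
        assume a1: "r1 = 0"
        show ?thesis
          proof (rule disjE[OF d(3)])
            assume a2: "r2 = 0"
            show ?thesis
              proof (rule disjE[OF d(4)])
                assume a3: "r3 = 0"
                show ?thesis
                  proof (rule disjE[OF d(5)])
                    assume a4: "r4 = 0"
                    show ?thesis
                      by (rule c00000[OF a0 a1 a2 a3 a4])
                  next
                    assume a4: "1 + r0 - r1 + r2 - r3 = 0"
                    show ?thesis
                      by (rule c00001[OF a0 a1 a2 a3 a4])
                  qed
              next
                assume a3: "1 + r4 - r0 + r1 - r2 = 0"
                show ?thesis
                  proof (rule disjE[OF d(5)])
                    assume a4: "r4 = 0"
                    show ?thesis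
                      by (rule c00010[OF a0 a1 a2 a3 a4])
                  next
                    assume a4: "1 + r0 - r1 + r2 - r3 = 0"
                    show ?thesis
                      by (rule c00011[OF a0 a1 a2 a3 a4])
                  qed
              qed
          next
            assume a2: "1 + r3 - r4 + r0 - r1 = 0"
            show ?thesis
              proof (rule disjE[OF d(4)])
                assume a3: "r3 = 0"
                show ?thesis
                  proof (rule disjE[OF d(5)])
                    assume a4: "r4 = 0"
                    show ?thesis
                      by (rule c00100[OF a0 a1 a2 a3 a4])
                  next
                    assume a4: "1 + r0 - r1 + r2 - r3 = 0"
                    show ?thesis
                      by (rule c00101[OF a0 a1 a2 a3 a4])
                  qed
              next
                assume a3: "1 + r4 - r0 + r1 - r2 = 0"
                show ?thesis
                  proof (rule disjE[OF d(5)])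
                    assume a4: "r4 = 0"
                    show ?thesis
                      by (rule c00110[OF a0 a1 a2 a3 a4])
                  next
                    assume a4: "1 + r0 - r1 + r2 - r3 = 0"
                    show ?thesis
                      by (rule c00111[OF a0 a1 a2 a3 a4])
                  qed
              qed
          qed
      next
        assume a1: "1 + r2 - r3 + r4 - r0 = 0"
        show ?thesis
          proof (rule disjE[OF d(3)])
            assume a2: "r2 = 0"
            show ?thesis
              proof (rule disjE[OF d(4)])
                assume a3: "r3 = 0"
                show ?thesis
                  proof (rule disjE[OF d(5)])
                    assume a4: "r4 = 0"
                    show ?thesis
                      by (rule c01000[OF a0 a1 a2 a3 a4])
                  next
                    assume a4: "1 + r0 - r1 + r2 - r3 = 0"
                    show ?thesis
                      by (rule c01001[OF a0 a1 a2 a3 a4])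
                  qed
              next
                assume a3: "1 + r4 - r0 + r1 - r2 = 0"
                show ?thesis
                  proof (rule disjE[OF d(5)])
                    assume a4: "r4 = 0"
                    show ?thesis
                      by (rule c01010[OF a0 a1 a2 a3 a4])
                  next
                    assume a4: "1 + r0 - r1 + r2 - r3 = 0"
                    show ?thesis
                      by (rule c01011[OF a0 a1 a2 a3 a4])
                  qed
              qed
          next
            assume a2: "1 + r3 - r4 + r0 - r1 = 0"
            show ?thesis
              proof (rule disjE[OF d(4)])
                assume a3: "r3 = 0"
                show ?thesis
                  proof (rule disjE[OF d(5)])
                    assume a4: "r4 = 0"
                    show ?thesis
                      by (rule c01100[OF a0 a1 a2 a3 a4])
                  next
                    assume a4: "1 + r0 - r1 + r2 - r3 = 0"
                    show ?thesis
                      by (rule c01101[OF a0 a1 a2 a3 a4])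
                  qed
              next
                assume a3: "1 + r4 - r0 + r1 - r2 = 0"
                show ?thesis
                  proof (rule disjE[OF d(5)])
                    assume a4: "r4 = 0"
                    show ?thesis
                      by (rule c01110[OF a0 a1 a2 a3 a4])
                  next
                    assume a4: "1 + r0 - r1 + r2 - r3 = 0"
                    show ?thesis
                      by (rule c01111[OF a0 a1 a2 a3 a4])
                  qed
              qed
          qed
      qed
  next
    assume a0: "1 + r1 - r2 + r3 - r4 = 0"
    show ?thesis
      proof (rule disjE[OF d(2)])
        assume a1: "r1 = 0"
        show ?thesis
          proof (rule disjE[OF d(3)])
            assume a2: "r2 = 0"
            show ?thesis
              proof (rule disjE[OF d(4)])
                assume a3: "r3 = 0"
                show ?thesis
                  proof (rule disjE[OF d(5)])
                    assume a4: "r4 = 0"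
                    show ?thesis
                      by (rule c10000[OF a0 a1 a2 a3 a4])
                  next
                    assume a4: "1 + r0 - r1 + r2 - r3 = 0"
                    show ?thesis
                      by (rule c10001[OF a0 a1 a2 a3 a4])
                  qed
              next
                assume a3: "1 + r4 - r0 + r1 - r2 = 0"
                show ?thesis
                  proof (rule disjE[OF d(5)])
                    assume a4: "r4 = 0"
                    show ?thesis
                      by (rule c10010[OF a0 a1 a2 a3 a4])
                  next
                    assume a4: "1 + r0 - r1 + r2 - r3 = 0"
                    show ?thesis
                      by (rule c10011[OF a0 a1 a2 a3 a4])
                  qed
              qed
          next
            assume a2: "1 + r3 - r4 + r0 - r1 = 0"
            show ?thesis
              proof (rule disjE[OF d(4)])
                assume a3: "r3 = 0"
                show ?thesis
                  proof (rule disjE[OF d(5)])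
                    assume a4: "r4 = 0"
                    show ?thesis
                      by (rule c10100[OF a0 a1 a2 a3 a4])
                  next
                    assume a4: "1 + r0 - r1 + r2 - r3 = 0"
                    show ?thesis
                      by (rule c10101[OF a0 a1 a2 a3 a4])
                  qed
              next
                assume a3: "1 + r4 - r0 + r1 - r2 = 0"
                show ?thesis
                  proof (rule disjE[OF d(5)])
                    assume a4: "r4 = 0"
                    show ?thesis
                      by (rule c10110[OF a0 a1 a2 a3 a4])
                  next
                    assume a4: "1 + r0 - r1 + r2 - r3 = 0"
                    show ?thesis
                      by (rule c10111[OF a0 a1 a2 a3 a4])
                  qed
              qed
          qed
      next
        assume a1: "1 + r2 - r3 + r4 - r0 = 0"
        show ?thesis
          proof (rule disjE[OF d(3)])
            assume a2: "r2 = 0"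
            show ?thesis
              proof (rule disjE[OF d(4)])
                assume a3: "r3 = 0"
                show ?thesis
                  proof (rule disjE[OF d(5)])
                    assume a4: "r4 = 0"
                    show ?thesis
                      by (rule c11000[OF a0 a1 a2 a3 a4])
                  next
                    assume a4: "1 + r0 - r1 + r2 - r3 = 0"
                    show ?thesis
                      by (rule c11001[OF a0 a1 a2 a3 a4])
                  qed
              next
                assume a3: "1 + r4 - r0 + r1 - r2 = 0"
                show ?thesis
                  proof (rule disjE[OF d(5)])
                    assume a4: "r4 = 0"
                    show ?thesis
                      by (rule c11010[OF a0 a1 a2 a3 a4])
                  next
                    assume a4: "1 + r0 - r1 + r2 - r3 = 0"
                    show ?thesis
                      by (rule c11011[OF a0 a1 a2 a3 a4])
                  qed
              qed
          next
            assume a2: "1 + r3 - r4 + r0 - r1 = 0"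
            show ?thesis
              proof (rule disjE[OF d(4)])
                assume a3: "r3 = 0"
                show ?thesis
                  proof (rule disjE[OF d(5)])
                    assume a4: "r4 = 0"
                    show ?thesis
                      by (rule c11100[OF a0 a1 a2 a3 a4])
                  next
                    assume a4: "1 + r0 - r1 + r2 - r3 = 0"
                    show ?thesis
                      by (rule c11101[OF a0 a1 a2 a3 a4])
                  qed
              next
                assume a3: "1 + r4 - r0 + r1 - r2 = 0"
                show ?thesis
                  proof (rule disjE[OF d(5)])
                    assume a4: "r4 = 0"
                    show ?thesis
                      by (rule c11110[OF a0 a1 a2 a3 a4])
                  next
                    assume a4: "1 + r0 - r1 + r2 - r3 = 0"
                    show ?thesis
                      by (rule c11111[OF a0 a1 a2 a3 a4])
                  qed
              qed
          qed
      qed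
  qed
qed

lemma sum5: "(\<Sum>j<(5::nat). g j) = g 0 + g 1 + g 2 + g 3 + g 4" for g :: "nat \<Rightarrow> 'a::comm_monoid_add"
  by (simp add: eval_nat_numeral add_ac)

lemma local_res:
  fixes S :: "nat \<Rightarrow> complex fls" and \<alpha> :: "nat \<Rightarrow> real" and z :: complex
  assumes ode: "\<And>j. j < 5 \<Longrightarrow> fls_deriv (S j) = S j * (S ((j+1) mod 5) - S ((j+2) mod 5) + S ((j+3) mod 5) - S ((j+4) mod 5)) + fls_const (complex_of_real (\<alpha> j))"
    and sm: "(\<Sum>j<5. S j) = fls_const z + fls_X"
    and pos: "\<And>j. j<5 \<Longrightarrow> 0 \<le> \<alpha> j"
  shows "Im (fls_nth (\<Sum>j<5. S j * S ((j+1) mod 5) * S ((j+2) mod 5)) (-1)) = 0 \<and>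
         0 \<le> Re (fls_nth (\<Sum>j<5. S j * S ((j+1) mod 5) * S ((j+2) mod 5)) (-1))"
proof -
  define y0 where "y0 = S 0"
  define y1 where "y1 = S 1"
  define y2 where "y2 = S 2"
  define y3 where "y3 = S 3"
  define y4 where "y4 = S 4"
  define c0 where "c0 = fls_const (complex_of_real (\<alpha> 0))"
  define c1 where "c1 = fls_const (complex_of_real (\<alpha> 1))"
  define c2 where "c2 = fls_const (complex_of_real (\<alpha> 2))"
  define c3 where "c3 = fls_const (complex_of_real (\<alpha> 3))"
  define c4 where "c4 = fls_const (complex_of_real (\<alpha> 4))"
  have ii: "(0+1) mod 5 = (1::nat)" "(0+2) mod 5 = (2::nat)" "(0+3) mod 5 = (3::nat)" "(0+4) mod 5 = (4::nat)" "(1+1) mod 5 = (2::nat)" "(1+2) mod 5 = (3::nat)" "(1+3) mod 5 = (4::nat)" "(1+4) mod 5 = (0::nat)" "(2+1) mod 5 = (3::nat)" "(2+2) mod 5 = (4::nat)" "(2+3) mod 5 = (0::nat)" "(2+4) mod 5 = (1::nat)" "(3+1) mod 5 = (4::nat)" "(3+2) mod 5 = (0::nat)" "(3+3) mod 5 = (1::nat)" "(3+4) mod 5 = (2::nat)" "(4+1) mod 5 = (0::nat)" "(4+2) mod 5 = (1::nat)" "(4+3) mod 5 = (2::nat)" "(4+4) mod 5 = (3::nat)" by simp_all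
  have o0: "fls_deriv y0 = y0 * (y1 - y2 + y3 - y4) + c0" using ode[of 0] unfolding ii by (simp add: y0_def y1_def y2_def y3_def y4_def c0_def)
  have o1: "fls_deriv y1 = y1 * (y2 - y3 + y4 - y0) + c1" using ode[of 1] unfolding ii by (simp add: y0_def y1_def y2_def y3_def y4_def c1_def)
  have o2: "fls_deriv y2 = y2 * (y3 - y4 + y0 - y1) + c2" using ode[of 2] unfolding ii by (simp add: y0_def y1_def y2_def y3_def y4_def c2_def)
  have o3: "fls_deriv y3 = y3 * (y4 - y0 + y1 - y2) + c3" using ode[of 3] unfolding ii by (simp add: y0_def y1_def y2_def y3_def y4_def c3_def)
  have o4: "fls_deriv y4 = y4 * (y0 - y1 + y2 - y3) + c4" using ode[of 4] unfolding ii by (simp add: y0_def y1_def y2_def y3_def y4_def c4_def)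
  have sm': "y0 + y1 + y2 + y3 + y4 = fls_const z + fls_X"
    using sm unfolding sum5 y0_def y1_def y2_def y3_def y4_def .
  have Hd: "(\<Sum>j<5. S j * S ((j+1) mod 5) * S ((j+2) mod 5)) = y0*y1*y2 + y1*y2*y3 + y2*y3*y4 + y3*y4*y0 + y4*y0*y1"
    unfolding sum5 ii y0_def y1_def y2_def y3_def y4_def by (rule refl)
  have sub: "-1 \<le> fls_subdegree y0 \<and> -1 \<le> fls_subdegree y1 \<and> -1 \<le> fls_subdegree y2 \<and> -1 \<le> fls_subdegree y3 \<and> -1 \<le> fls_subdegree y4"
  proof (rule ccontr)
    assume nc: "\<not> ?thesis"
    define d where "d = min (fls_subdegree y0) (min (fls_subdegree y1) (min (fls_subdegree y2) (min (fls_subdegree y3) (fls_subdegree y4))))"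
    have dle: "d \<le> fls_subdegree y0" "d \<le> fls_subdegree y1" "d \<le> fls_subdegree y2" "d \<le> fls_subdegree y3" "d \<le> fls_subdegree y4"
      by (auto simp: d_def)
    have d2: "d \<le> -2" using nc by (auto simp: d_def)
    have m: "fls_nth (f*g) (d+d) = fls_nth f d * fls_nth g d"
      if "d \<le> fls_subdegree f" "d \<le> fls_subdegree g" for f g :: "complex fls"
      using fls_mult_low[OF that] .
    have z1: "fls_nth (fls_deriv f) (d+d) = 0" if "d \<le> fls_subdegree f" for f :: "complex fls"
      using d2 that by simp
    have cz: "fls_nth (fls_const c) (d+d) = 0" for c :: complex using d2 by simp
    have e: "fls_nth (fls_deriv s) (d+d) = fls_nth (s * (a - b + c - e) + cc) (d+d)" 
      if "fls_deriv s = s * (a - b + c - e) + cc" for s a b c e cc using that by simp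
    have "fls_nth (s * (a - b + c - e) + fls_const k) (d+d) = fls_nth s d * (fls_nth a d - fls_nth b d + fls_nth c d - fls_nth e d)"
      if "d \<le> fls_subdegree s" "d \<le> fls_subdegree a" "d \<le> fls_subdegree b" "d \<le> fls_subdegree c" "d \<le> fls_subdegree e"
      for s a b c e :: "complex fls" and k
    proof -
      have "s * (a - b + c - e) + fls_const k = s*a - s*b + s*c - s*e + fls_const k" by (simp add: algebra_simps)
      then have "fls_nth (s * (a - b + c - e) + fls_const k) (d+d) =
         fls_nth (s*a) (d+d) - fls_nth (s*b) (d+d) + fls_nth (s*c) (d+d) - fls_nth (s*e) (d+d) + fls_nth (fls_const k) (d+d)"
        by (simp only: fls_plus_nth fls_minus_nth)
      also have "\<dots> = fls_nth s d * fls_nth a d - fls_nth s d * fls_nth b d + fls_nth s d * fls_nth c d - fls_nth s d * fls_nth e d"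
        by (simp only: m that cz; simp)
      finally show ?thesis by (simp add: algebra_simps)
    qed
    note q = this
    have "fls_nth y0 d * (fls_nth y1 d - fls_nth y2 d + fls_nth y3 d - fls_nth y4 d) = 0"
      using e[OF o0] q[OF dle(1,2,3,4,5)] z1[OF dle(1)] by (simp add: c0_def)
    moreover have "fls_nth y1 d * (fls_nth y2 d - fls_nth y3 d + fls_nth y4 d - fls_nth y0 d) = 0"
      using e[OF o1] q[OF dle(2,3,4,5,1)] z1[OF dle(2)] by (simp add: c1_def)
    moreover have "fls_nth y2 d * (fls_nth y3 d - fls_nth y4 d + fls_nth y0 d - fls_nth y1 d) = 0"
      using e[OF o2] q[OF dle(3,4,5,1,2)] z1[OF dle(3)] by (simp add: c2_def)
    moreover have "fls_nth y3 d * (fls_nth y4 d - fls_nth y0 d + fls_nth y1 d - fls_nth y2 d) = 0"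
      using e[OF o3] q[OF dle(4,5,1,2,3)] z1[OF dle(4)] by (simp add: c3_def)
    moreover have "fls_nth y4 d * (fls_nth y0 d - fls_nth y1 d + fls_nth y2 d - fls_nth y3 d) = 0"
      using e[OF o4] q[OF dle(5,1,2,3,4)] z1[OF dle(5)] by (simp add: c4_def)
    moreover have "fls_nth y0 d + fls_nth y1 d + fls_nth y2 d + fls_nth y3 d + fls_nth y4 d = 0"
    proof -
      have "fls_nth (y0 + y1 + y2 + y3 + y4) d = fls_nth (fls_const z + fls_X) d" using sm' by simp
      then show ?thesis using d2 by simp
    qed
    ultimately have all0: "fls_nth y0 d = 0 \<and> fls_nth y1 d = 0 \<and> fls_nth y2 d = 0 \<and> fls_nth y3 d = 0 \<and> fls_nth y4 d = 0"
      by (rule L1)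
    have "\<exists>s\<in>{y0,y1,y2,y3,y4}. fls_subdegree s = d"
      unfolding d_def by (simp add: min_def)
    then obtain s where s: "s \<in> {y0,y1,y2,y3,y4}" "fls_subdegree s = d" by blast
    then have "s \<noteq> 0" using d2 by auto
    then have "fls_nth s d \<noteq> 0" using s(2) nth_fls_subdegree_nonzero by blast
    then show False using s(1) all0 by auto
  qed
  define r0 where "r0 = fls_nth y0 (-1)"
  define r1 where "r1 = fls_nth y1 (-1)"
  define r2 where "r2 = fls_nth y2 (-1)"
  define r3 where "r3 = fls_nth y3 (-1)"
  define r4 where "r4 = fls_nth y4 (-1)"
  have m: "fls_nth (f*g) (-2) = fls_nth f (-1) * fls_nth g (-1)"
    if "-1 \<le> fls_subdegree f" "-1 \<le> fls_subdegree g" for f g :: "complex fls"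
    using fls_mult_low[OF that] by simp
  have e: "fls_nth (fls_deriv s) (-2) = fls_nth (s * (a - b + c - e) + cc) (-2)" 
    if "fls_deriv s = s * (a - b + c - e) + cc" for s a b c e cc using that by simp
have q: "fls_nth (s * (a - b + c - e) + fls_const k) (-2) = fls_nth s (-1) * (fls_nth a (-1) - fls_nth b (-1) + fls_nth c (-1) - fls_nth e (-1))"
    if "-1 \<le> fls_subdegree s" "-1 \<le> fls_subdegree a" "-1 \<le> fls_subdegree b" "-1 \<le> fls_subdegree c" "-1 \<le> fls_subdegree e"
    for s a b c e :: "complex fls" and k
  proof -
    have "s * (a - b + c - e) + fls_const k = s*a - s*b + s*c - s*e + fls_const k" by (simp add: algebra_simps)
    then have "fls_nth (s * (a - b + c - e) + fls_const k) (-2) =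
       fls_nth (s*a) (-2) - fls_nth (s*b) (-2) + fls_nth (s*c) (-2) - fls_nth (s*e) (-2) + fls_nth (fls_const k) (-2)"
      by (simp only: fls_plus_nth fls_minus_nth)
    also have "\<dots> = fls_nth s (-1) * fls_nth a (-1) - fls_nth s (-1) * fls_nth b (-1) + fls_nth s (-1) * fls_nth c (-1) - fls_nth s (-1) * fls_nth e (-1)"
      by (simp only: m that; simp)
    finally show ?thesis by (simp add: algebra_simps)
  qed
  have sb: "-1 \<le> fls_subdegree y0" "-1 \<le> fls_subdegree y1" "-1 \<le> fls_subdegree y2" "-1 \<le> fls_subdegree y3" "-1 \<le> fls_subdegree y4"
    using sub by auto
  have dn: "\<And>f::complex fls. fls_nth (fls_deriv f) (-2) = - fls_nth f (-1)" by simp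
  have "r0 * (1 + r1 - r2 + r3 - r4) = 0"
  proof -
    have "- r0 = r0 * (r1 - r2 + r3 - r4)"
      using e[OF o0] q[OF sb(1,2,3,4,5)] dn[of y0] by (simp add: c0_def r0_def r1_def r2_def r3_def r4_def)
    then show ?thesis by (simp add: algebra_simps)
  qed
  moreover have "r1 * (1 + r2 - r3 + r4 - r0) = 0"
  proof -
    have "- r1 = r1 * (r2 - r3 + r4 - r0)"
      using e[OF o1] q[OF sb(2,3,4,5,1)] dn[of y1] by (simp add: c1_def r0_def r1_def r2_def r3_def r4_def)
    then show ?thesis by (simp add: algebra_simps)
  qed
  moreover have "r2 * (1 + r3 - r4 + r0 - r1) = 0"
  proof -
    have "- r2 = r2 * (r3 - r4 + r0 - r1)"
      using e[OF o2] q[OF sb(3,4,5,1,2)] dn[of y2] by (simp add: c2_def r0_def r1_def r2_def r3_def r4_def)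
    then show ?thesis by (simp add: algebra_simps)
  qed
  moreover have "r3 * (1 + r4 - r0 + r1 - r2) = 0"
  proof -
    have "- r3 = r3 * (r4 - r0 + r1 - r2)"
      using e[OF o3] q[OF sb(4,5,1,2,3)] dn[of y3] by (simp add: c3_def r0_def r1_def r2_def r3_def r4_def)
    then show ?thesis by (simp add: algebra_simps)
  qed
  moreover have "r4 * (1 + r0 - r1 + r2 - r3) = 0"
  proof -
    have "- r4 = r4 * (r0 - r1 + r2 - r3)"
      using e[OF o4] q[OF sb(5,1,2,3,4)] dn[of y4] by (simp add: c4_def r0_def r1_def r2_def r3_def r4_def)
    then show ?thesis by (simp add: algebra_simps)
  qed
  moreover have "r0 + r1 + r2 + r3 + r4 = 0"
  proof -
    have "fls_nth (y0 + y1 + y2 + y3 + y4) (-1) = fls_nth (fls_const z + fls_X) (-1)" using sm' by simp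
    then show ?thesis by (simp add: r0_def r1_def r2_def r3_def r4_def)
  qed
  ultimately have PP: "\<forall>P \<in> {r1 * r2 + r1 * r4 + r3 * r4, r2 * r3 + r2 * r0 + r4 * r0, r3 * r4 + r3 * r1 + r0 * r1, r4 * r0 + r4 * r2 + r1 * r2, r0 * r1 + r0 * r3 + r2 * r3}. Im P = 0 \<and> Re P \<le> 0"
    by (rule L2)
  have DH: "fls_deriv (y0*y1*y2 + y1*y2*y3 + y2*y3*y4 + y3*y4*y0 + y4*y0*y1) =
     c0 * (y1*y2 + y1*y4 + y3*y4) + c1 * (y2*y3 + y2*y0 + y4*y0) + c2 * (y3*y4 + y3*y1 + y0*y1)
   + c3 * (y4*y0 + y4*y2 + y1*y2) + c4 * (y0*y1 + y0*y3 + y2*y3)"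
    by (rule derivH[OF o0 o1 o2 o3 o4])
  have "fls_nth (y0*y1*y2 + y1*y2*y3 + y2*y3*y4 + y3*y4*y0 + y4*y0*y1) (-1) =
      - (of_real (\<alpha> 0) * (r1 * r2 + r1 * r4 + r3 * r4) + of_real (\<alpha> 1) * (r2 * r3 + r2 * r0 + r4 * r0)
       + of_real (\<alpha> 2) * (r3 * r4 + r3 * r1 + r0 * r1) + of_real (\<alpha> 3) * (r4 * r0 + r4 * r2 + r1 * r2)
       + of_real (\<alpha> 4) * (r0 * r1 + r0 * r3 + r2 * r3))"
  proof -
    define Hy where "Hy = y0*y1*y2 + y1*y2*y3 + y2*y3*y4 + y3*y4*y0 + y4*y0*y1"
    have E1: "fls_nth (fls_deriv Hy) (-2) =
       fls_nth (c0 * (y1*y2 + y1*y4 + y3*y4) + c1 * (y2*y3 + y2*y0 + y4*y0) + c2 * (y3*y4 + y3*y1 + y0*y1)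
   + c3 * (y4*y0 + y4*y2 + y1*y2) + c4 * (y0*y1 + y0*y3 + y2*y3)) (-2)" unfolding Hy_def DH ..
    have E2: "fls_nth (c0 * (y1*y2 + y1*y4 + y3*y4) + c1 * (y2*y3 + y2*y0 + y4*y0) + c2 * (y3*y4 + y3*y1 + y0*y1)
   + c3 * (y4*y0 + y4*y2 + y1*y2) + c4 * (y0*y1 + y0*y3 + y2*y3)) (-2) =
      (of_real (\<alpha> 0) * (r1 * r2 + r1 * r4 + r3 * r4) + of_real (\<alpha> 1) * (r2 * r3 + r2 * r0 + r4 * r0)
       + of_real (\<alpha> 2) * (r3 * r4 + r3 * r1 + r0 * r1) + of_real (\<alpha> 3) * (r4 * r0 + r4 * r2 + r1 * r2)
       + of_real (\<alpha> 4) * (r0 * r1 + r0 * r3 + r2 * r3))"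
      unfolding c0_def c1_def c2_def c3_def c4_def r0_def r1_def r2_def r3_def r4_def
      by (simp only: fls_plus_nth fls_mult_const_nth distrib_left m sb)
    have E3: "fls_nth (fls_deriv Hy) (-2) = - fls_nth Hy (-1)" by (rule dn)
    show ?thesis using E1 E2 E3 unfolding Hy_def by (metis minus_minus)
  qed
  note eqH = this
  define P0 where "P0 = r1 * r2 + r1 * r4 + r3 * r4"
  define P1 where "P1 = r2 * r3 + r2 * r0 + r4 * r0"
  define P2 where "P2 = r3 * r4 + r3 * r1 + r0 * r1"
  define P3 where "P3 = r4 * r0 + r4 * r2 + r1 * r2"
  define P4 where "P4 = r0 * r1 + r0 * r3 + r2 * r3"
  have Pall: "Im P0 = 0 \<and> Re P0 \<le> 0" "Im P1 = 0 \<and> Re P1 \<le> 0" "Im P2 = 0 \<and> Re P2 \<le> 0"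
     "Im P3 = 0 \<and> Re P3 \<le> 0" "Im P4 = 0 \<and> Re P4 \<le> 0"
    using PP unfolding P0_def P1_def P2_def P3_def P4_def by blast+
  have eqH': "fls_nth (\<Sum>j<5. S j * S ((j+1) mod 5) * S ((j+2) mod 5)) (-1) =
     - (of_real (\<alpha> 0) * P0 + of_real (\<alpha> 1) * P1 + of_real (\<alpha> 2) * P2 + of_real (\<alpha> 3) * P3 + of_real (\<alpha> 4) * P4)"
    unfolding Hd eqH P0_def P1_def P2_def P3_def P4_def ..
  have nn: "\<alpha> 0 * Re P0 \<le> 0" "\<alpha> 1 * Re P1 \<le> 0" "\<alpha> 2 * Re P2 \<le> 0" "\<alpha> 3 * Re P3 \<le> 0" "\<alpha> 4 * Re P4 \<le> 0"
    using Pall pos[of 0] pos[of 1] pos[of 2] pos[of 3] pos[of 4] by (simp_all add: mult_nonneg_nonpos)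
  show ?thesis unfolding eqH' using Pall nn by simp
qed



lemma poly_holo: "poly (p :: complex poly) holomorphic_on S"
  unfolding holomorphic_on_def field_differentiable_def
  using poly_DERIV has_field_derivative_at_within by blast

lemma poly_shift_analytic: "(\<lambda>x. poly (p :: complex poly) (z + x)) analytic_on {0}"
proof -
  have "(\<lambda>x. poly p (z + x)) = poly (p \<circ>\<^sub>p [:z, 1:])"
    by (auto simp: poly_pcompose add_ac)
  moreover have "poly (p \<circ>\<^sub>p [:z, 1:]) analytic_on UNIV"
    by (simp add: analytic_on_open poly_holo)
  ultimately show ?thesis using analytic_on_subset by auto
qed

lemma rat_laurent:
  assumes "rational_fun g"
  shows "\<exists>F. (\<lambda>x. g (z + x)) has_laurent_expansion F"
proof -
  obtain p q where q: "q \<noteq> 0" and e: "\<forall>t. poly q t \<noteq> 0 \<longrightarrow> g t = poly p t / poly q t"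
    using assms unfolding rational_fun_def by blast
  have P: "(\<lambda>x. poly p (z + x)) has_laurent_expansion fps_to_fls (fps_expansion (\<lambda>x. poly p (z + x)) 0)"
    by (intro has_laurent_expansion_fps analytic_at_imp_has_fps_expansion_0) (rule poly_shift_analytic)
  have Q: "(\<lambda>x. poly q (z + x)) has_laurent_expansion fps_to_fls (fps_expansion (\<lambda>x. poly q (z + x)) 0)"
    by (intro has_laurent_expansion_fps analytic_at_imp_has_fps_expansion_0) (rule poly_shift_analytic)
  have D: "(\<lambda>x. poly p (z + x) / poly q (z + x)) has_laurent_expansion
      (fps_to_fls (fps_expansion (\<lambda>x. poly p (z + x)) 0) / fps_to_fls (fps_expansion (\<lambda>x. poly q (z + x)) 0))"
    by (rule has_laurent_expansion_divide[OF P Q])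
  have sub: "{x. poly q (z + x) = 0} \<subseteq> (\<lambda>t. t - z) ` {t. poly q t = 0}"
  proof
    fix x assume "x \<in> {x. poly q (z + x) = 0}"
    then show "x \<in> (\<lambda>t. t - z) ` {t. poly q t = 0}" by (intro image_eqI[of _ _ "z + x"]) auto
  qed
  have fin: "finite {x. poly q (z + x) = 0}"
    by (rule finite_subset[OF sub finite_imageI[OF poly_roots_finite[OF q]]])
  have "eventually (\<lambda>x. x \<notin> {x. poly q (z + x) = 0}) (at 0)"
    using islimpt_finite[OF fin] islimpt_iff_eventually by blast
  then have ev: "eventually (\<lambda>x. poly p (z + x) / poly q (z + x) = g (z + x)) (at 0)"
    by eventually_elim (use e in auto)
  then have "(\<lambda>x. g (z + x)) has_laurent_expansion
      (fps_to_fls (fps_expansion (\<lambda>x. poly p (z + x)) 0) / fps_to_fls (fps_expansion (\<lambda>x. poly q (z + x)) 0))"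
    using D has_laurent_expansion_cong[OF ev refl] by blast
  then show ?thesis by blast
qed

lemma residue_nonneg:
  fixes \<alpha> :: "nat \<Rightarrow> real" and f :: "nat \<Rightarrow> complex \<Rightarrow> complex"
  assumes pos: "\<forall>i<5. 0 \<le> \<alpha> i" and sol: "A4_rational_solution \<alpha> f"
  shows "Im (residue (A4_H f) z) = 0 \<and> 0 \<le> Re (residue (A4_H f) z)"
proof -
  from sol obtain F where rat: "\<forall>j<5. rational_fun (f j)" and fin: "finite F"
    and ode: "\<forall>t. t \<notin> F \<longrightarrow>
        (\<forall>j<5. (f j has_field_derivative
            (f j t * (f ((j+1) mod 5) t - f ((j+2) mod 5) t + f ((j+3) mod 5) t - f ((j+4) mod 5) t)
             + complex_of_real (\<alpha> j))) (at t)) \<and>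
        (\<Sum>j<5. f j t) = t"
    unfolding A4_rational_solution_def by blast
  have "\<forall>j. \<exists>L. j < 5 \<longrightarrow> (\<lambda>x. f j (z+x)) has_laurent_expansion L"
    using rat rat_laurent by blast
  then obtain L where L0: "\<forall>j. j < 5 \<longrightarrow> (\<lambda>x. f j (z+x)) has_laurent_expansion L j"
    using choice[of "\<lambda>j L. j < 5 \<longrightarrow> (\<lambda>x. f j (z+x)) has_laurent_expansion L"] by blast
  have L: "\<And>j. j < 5 \<Longrightarrow> (\<lambda>x. f j (z+x)) has_laurent_expansion L j" using L0 by blast
  define A where "A = UNIV - {x. z + x \<in> F \<and> x \<noteq> 0}"
  have sub: "{x. z + x \<in> F \<and> x \<noteq> 0} \<subseteq> (\<lambda>t. t - z) ` F"
  proof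
    fix x assume "x \<in> {x. z + x \<in> F \<and> x \<noteq> 0}"
    then show "x \<in> (\<lambda>t. t - z) ` F" by (intro image_eqI[of _ _ "z + x"]) auto
  qed
  have "finite {x. z + x \<in> F \<and> x \<noteq> 0}"
    by (rule finite_subset[OF sub finite_imageI[OF fin]])
  then have oA: "open A" unfolding A_def by (simp add: finite_imp_closed open_Diff)
  have A0: "0 \<in> A" unfolding A_def by simp
  have AF: "z + x \<notin> F" if "x \<in> A - {0}" for x using that unfolding A_def by auto
  have evA: "eventually (\<lambda>x. x \<in> A - {0}) (at 0)"
    by (rule eventually_at_in_open[OF oA A0])
  have odeD: "(f j has_field_derivative
            (f j t * (f ((j+1) mod 5) t - f ((j+2) mod 5) t + f ((j+3) mod 5) t - f ((j+4) mod 5) t)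
             + complex_of_real (\<alpha> j))) (at t)" if "t \<notin> F" "j < 5" for t j
    using ode that by blast
  have odeS: "(\<Sum>j<5. f j t) = t" if "t \<notin> F" for t
    using ode that by blast
  have Lode: "fls_deriv (L j) = L j * (L ((j+1) mod 5) - L ((j+2) mod 5) + L ((j+3) mod 5) - L ((j+4) mod 5))
      + fls_const (complex_of_real (\<alpha> j))" if j: "j < 5" for j
  proof -
    have d: "((\<lambda>x. f j (z+x)) has_field_derivative
        (f j (z+x) * (f ((j+1) mod 5) (z+x) - f ((j+2) mod 5) (z+x) + f ((j+3) mod 5) (z+x) - f ((j+4) mod 5) (z+x))
             + complex_of_real (\<alpha> j))) (at x)" if "x \<in> A - {0}" for x
    proof -
      have h1: "(f j has_field_derivative
        (f j (z+x) * (f ((j+1) mod 5) (z+x) - f ((j+2) mod 5) (z+x) + f ((j+3) mod 5) (z+x) - f ((j+4) mod 5) (z+x))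
             + complex_of_real (\<alpha> j))) (at (z + x))"
        by (rule odeD[OF AF[OF that] j])
      have h2: "((\<lambda>x. z + x) has_field_derivative 1) (at x)"
        using DERIV_add[OF DERIV_const DERIV_ident, of z x] by simp
      show ?thesis using DERIV_chain2[OF h1 h2] by simp
    qed
    have e1: "(\<lambda>x. f j (z+x) * (f ((j+1) mod 5) (z+x) - f ((j+2) mod 5) (z+x) + f ((j+3) mod 5) (z+x) - f ((j+4) mod 5) (z+x))
             + complex_of_real (\<alpha> j)) has_laurent_expansion fls_deriv (L j)"
      by (rule has_laurent_expansion_deriv'[OF L[OF j] oA A0 d])
    have Lk: "(\<lambda>x. f ((j+k) mod 5) (z+x)) has_laurent_expansion L ((j+k) mod 5)" for k
      by (rule L) simp
    have e2: "(\<lambda>x. f j (z+x) * (f ((j+1) mod 5) (z+x) - f ((j+2) mod 5) (z+x) + f ((j+3) mod 5) (z+x) - f ((j+4) mod 5) (z+x))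
             + complex_of_real (\<alpha> j)) has_laurent_expansion
        L j * (L ((j+1) mod 5) - L ((j+2) mod 5) + L ((j+3) mod 5) - L ((j+4) mod 5)) + fls_const (complex_of_real (\<alpha> j))"
      by (rule has_laurent_expansion_add has_laurent_expansion_mult has_laurent_expansion_diff
           L[OF j] Lk has_laurent_expansion_const)+
    show ?thesis using has_laurent_expansion_unique[OF e1 e2] .
  qed
  have Lsum: "(\<Sum>j<5. L j) = fls_const z + fls_X"
  proof -
    have e1: "(\<lambda>x. \<Sum>j<5. f j (z+x)) has_laurent_expansion (\<Sum>j<5. L j)"
      by (rule has_laurent_expansion_sum) (rule L, simp)
    have ev: "eventually (\<lambda>x. z + x = (\<Sum>j<5. f j (z+x))) (at 0)"
    proof -
      have hz: "z + x = (\<Sum>j<5. f j (z+x))" if "x \<in> A - {0}" for x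
        using odeS[OF AF[OF that]] by simp
      show ?thesis by (rule eventually_mono[OF evA hz])
    qed
    have ze: "(\<lambda>x. z + x) has_laurent_expansion (fls_const z + fls_X)"
      by (rule has_laurent_expansion_add has_laurent_expansion_const has_laurent_expansion_fps_X)+
    have e2: "(\<lambda>x. \<Sum>j<5. f j (z+x)) has_laurent_expansion (fls_const z + fls_X)"
      using has_laurent_expansion_cong[OF ev refl] ze by blast
    show ?thesis using has_laurent_expansion_unique[OF e1 e2] .
  qed
  have HL: "(\<lambda>x. A4_H f (z + x)) has_laurent_expansion (\<Sum>j<5. L j * L ((j+1) mod 5) * L ((j+2) mod 5))"
  proof -
    have Lk: "(\<lambda>x. f ((j+k) mod 5) (z+x)) has_laurent_expansion L ((j+k) mod 5)" for j k
      by (rule L) simp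
    show ?thesis unfolding A4_H_def
      by (rule has_laurent_expansion_sum has_laurent_expansion_mult L Lk | simp)+
  qed
  have re: "residue (A4_H f) z = fls_residue (\<Sum>j<5. L j * L ((j+1) mod 5) * L ((j+2) mod 5))"
    by (rule has_laurent_expansion_residue[OF HL])
  have R: "Im (fls_nth (\<Sum>j<5. L j * L ((j+1) mod 5) * L ((j+2) mod 5)) (-1)) = 0 \<and>
         0 \<le> Re (fls_nth (\<Sum>j<5. L j * L ((j+1) mod 5) * L ((j+2) mod 5)) (-1))"
    by (rule local_res[of L \<alpha> z, OF Lode Lsum]) (use pos in blast)+
  show ?thesis unfolding re fls_residue_def using R .
qed

lemma finite_ev_inf:
  fixes A :: "complex set"
  assumes "finite A"
  shows "eventually (\<lambda>x. x \<notin> A) at_infinity"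
  unfolding eventually_at_infinity
proof (intro exI allI impI)
  fix x :: complex
  assume x: "(\<Sum>a\<in>A. norm a) + 1 \<le> norm x"
  show "x \<notin> A"
  proof
    assume "x \<in> A"
    then have "norm x \<le> (\<Sum>a\<in>A. norm a)"
      using assms by (intro member_le_sum) auto
    then show False using x by simp
  qed
qed

definition ratinf :: "(complex \<Rightarrow> complex) \<Rightarrow> bool" where
  "ratinf R \<longleftrightarrow> (\<exists>A B. B \<noteq> 0 \<and> eventually (\<lambda>t. R t = poly A t / poly B t) at_infinity)"

lemma poly_ev_nz: "(B :: complex poly) \<noteq> 0 \<Longrightarrow> eventually (\<lambda>t. poly B t \<noteq> 0) at_infinity"
  using finite_ev_inf[OF poly_roots_finite[of B]] by simp

lemma ratinf_rat: "rational_fun g \<Longrightarrow> ratinf g"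
proof -
  assume "rational_fun g"
  then obtain p q where q: "q \<noteq> 0" and e: "\<forall>t. poly q t \<noteq> 0 \<longrightarrow> g t = poly p t / poly q t"
    unfolding rational_fun_def by blast
  have "eventually (\<lambda>t. g t = poly p t / poly q t) at_infinity"
    using poly_ev_nz[OF q] by eventually_elim (use e in blast)
  then show "ratinf g" unfolding ratinf_def using q by blast
qed

lemma ratinf_mult: "ratinf R \<Longrightarrow> ratinf S \<Longrightarrow> ratinf (\<lambda>t. R t * S t)"
proof -
  assume "ratinf R" "ratinf S"
  then obtain A1 B1 A2 B2 where b: "B1 \<noteq> 0" "B2 \<noteq> 0"
    and e1: "eventually (\<lambda>t. R t = poly A1 t / poly B1 t) at_infinity"
    and e2: "eventually (\<lambda>t. S t = poly A2 t / poly B2 t) at_infinity"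
    unfolding ratinf_def by blast
  have "eventually (\<lambda>t. R t * S t = poly (A1 * A2) t / poly (B1 * B2) t) at_infinity"
    using e1 e2 by eventually_elim simp
  moreover have "B1 * B2 \<noteq> 0" using b by simp
  ultimately show ?thesis unfolding ratinf_def by blast
qed

lemma ratinf_add: "ratinf R \<Longrightarrow> ratinf S \<Longrightarrow> ratinf (\<lambda>t. R t + S t)"
proof -
  assume "ratinf R" "ratinf S"
  then obtain A1 B1 A2 B2 where b: "B1 \<noteq> 0" "B2 \<noteq> 0"
    and e1: "eventually (\<lambda>t. R t = poly A1 t / poly B1 t) at_infinity"
    and e2: "eventually (\<lambda>t. S t = poly A2 t / poly B2 t) at_infinity"
    unfolding ratinf_def by blast
  have "eventually (\<lambda>t. R t + S t = poly (A1 * B2 + A2 * B1) t / poly (B1 * B2) t) at_infinity"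
    using e1 e2 poly_ev_nz[OF b(1)] poly_ev_nz[OF b(2)] by eventually_elim (simp add: add_frac_eq)
  moreover have "B1 * B2 \<noteq> 0" using b by simp
  ultimately show ?thesis unfolding ratinf_def by blast
qed

lemma ratinf_sum: "finite J \<Longrightarrow> (\<And>j. j \<in> J \<Longrightarrow> ratinf (g j)) \<Longrightarrow> ratinf (\<lambda>t. \<Sum>j\<in>J. g j t)"
proof (induction J rule: finite_induct)
  case empty
  have "eventually (\<lambda>t. (\<Sum>j\<in>{}. g j t) = poly 0 t / poly 1 t) at_infinity" by simp
  then show ?case unfolding ratinf_def by (metis one_neq_zero)
next
  case (insert x F)
  then have "ratinf (\<lambda>t. g x t + (\<Sum>j\<in>F. g j t))"
    by (intro ratinf_add) auto
  then show ?case using insert by simp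
qed

lemma ratinf_lim:
  assumes "ratinf R"
  shows "\<exists>p c. ((\<lambda>t. t * (R t - poly p t)) \<longlongrightarrow> c) at_infinity"
proof -
  obtain A B where B: "B \<noteq> 0" and e: "eventually (\<lambda>t. R t = poly A t / poly B t) at_infinity"
    using assms unfolding ratinf_def by blast
  define p where "p = A div B"
  define r where "r = A mod B"
  define r' where "r' = pCons 0 r"
  have Adec: "A = p * B + r" unfolding p_def r_def by simp
  have ev: "eventually (\<lambda>t. t * (R t - poly p t) = poly r' t / poly B t) at_infinity"
    using e poly_ev_nz[OF B]
  proof eventually_elim
    case (elim t)
    have "poly A t = poly p t * poly B t + poly r t" by (subst Adec) simp
    then show ?case using elim by (simp add: r'_def field_simps)
  qed
  have deg: "degree r' \<le> degree B"
  proof (cases "r = 0")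
    case True then show ?thesis by (simp add: r'_def)
  next
    case False
    then have "degree r < degree B" using degree_mod_less[OF B, of A] unfolding r_def by auto
    then show ?thesis using False by (simp add: r'_def)
  qed
  have lim: "\<exists>c. ((\<lambda>t. poly r' t / poly B t) \<longlongrightarrow> c) at_infinity"
  proof (cases "degree r' < degree B")
    case True
    then show ?thesis using poly_divide_tendsto_0_at_infinity[of r' B] by blast
  next
    case False
    then have eq: "degree r' = degree B" using deg by simp
    have l1: "((\<lambda>t. poly r' t / t ^ degree B) \<longlongrightarrow> lead_coeff r') at_infinity"
      using poly_divide_tendsto_aux[of r'] eq by simp
    have l2: "((\<lambda>t. poly B t / t ^ degree B) \<longlongrightarrow> lead_coeff B) at_infinity"
      using poly_divide_tendsto_aux[of B] by simp
    have l3: "((\<lambda>t. (poly r' t / t ^ degree B) / (poly B t / t ^ degree B)) \<longlongrightarrow> lead_coeff r' / lead_coeff B) at_infinity"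
      using B by (intro tendsto_divide l1 l2) simp
    have ev3: "eventually (\<lambda>t. (poly r' t / t ^ degree B) / (poly B t / t ^ degree B) = poly r' t / poly B t) at_infinity"
    proof -
      have f0: "eventually (\<lambda>t. t \<notin> {0::complex}) at_infinity" by (rule finite_ev_inf) simp
      show ?thesis using f0 by eventually_elim simp
    qed
    then have "((\<lambda>t. poly r' t / poly B t) \<longlongrightarrow> lead_coeff r' / lead_coeff B) at_infinity"
      using l3 tendsto_cong[OF ev3] by blast
    then show ?thesis by blast
  qed
  then obtain c where cl: "((\<lambda>t. poly r' t / poly B t) \<longlongrightarrow> c) at_infinity" by blast
  then have "((\<lambda>t. t * (R t - poly p t)) \<longlongrightarrow> c) at_infinity"
    using tendsto_cong[OF ev] by blast
  then show ?thesis by blast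
qed

lemma laurent_eq:
  assumes lim: "((\<lambda>t. t * (R t - poly p t)) \<longlongrightarrow> c) at_infinity"
  shows "laurent_inf_coeff_m1 R = c"
  unfolding laurent_inf_coeff_m1_def
proof (rule the_equality)
  show "\<exists>p. ((\<lambda>t. t * (R t - poly p t)) \<longlongrightarrow> c) at_infinity" using lim by blast
next
  fix c' assume "\<exists>p. ((\<lambda>t. t * (R t - poly p t)) \<longlongrightarrow> c') at_infinity"
  then obtain p' where lim': "((\<lambda>t. t * (R t - poly p' t)) \<longlongrightarrow> c') at_infinity" by blast
  define d where "d = p - p'"
  have "((\<lambda>t. t * (R t - poly p' t) - t * (R t - poly p t)) \<longlongrightarrow> c' - c) at_infinity"
    by (intro tendsto_diff lim lim')
  moreover have "(\<lambda>t. t * (R t - poly p' t) - t * (R t - poly p t)) = poly (pCons 0 d)"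
    by (auto simp: d_def algebra_simps)
  ultimately have ld: "(poly (pCons 0 d) \<longlongrightarrow> c' - c) at_infinity" by simp
  have "d = 0"
  proof (rule ccontr)
    assume "d \<noteq> 0"
    then have "degree (pCons 0 d) > 0" by simp
    then have "filterlim (poly (pCons 0 d)) at_infinity at_infinity"
      by (rule filterlim_poly_at_infinity)
    then show False using not_tendsto_and_filterlim_at_infinity[OF _ ld] trivial_limit_at_infinity by auto
  qed
  then have "p = p'" by (simp add: d_def)
  with lim have "((\<lambda>t. t * (R t - poly p' t)) \<longlongrightarrow> c) at_infinity" by simp
  then show "c' = c" using tendsto_unique[OF trivial_limit_at_infinity lim'] by blast
qed

lemma small_zero: "(\<And>e. e > 0 \<Longrightarrow> norm (x::complex) \<le> e) \<Longrightarrow> x = 0"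
proof (rule ccontr)
  assume h: "\<And>e. e > 0 \<Longrightarrow> norm x \<le> e" and "x \<noteq> 0"
  then have "norm x > 0" by simp
  then have "norm x \<le> norm x / 2" using h[of "norm x / 2"] by simp
  then show False using \<open>norm x > 0\<close> by simp
qed

lemma res_sum:
  fixes H :: "complex \<Rightarrow> complex"
  assumes holo: "H holomorphic_on UNIV - P" and finP: "finite P"
    and lim: "((\<lambda>t. t * (H t - poly p t)) \<longlongrightarrow> c) at_infinity"
  shows "c = (\<Sum>w\<in>P. residue H w)"
proof -
  define K where "K = (\<Sum>w\<in>P. residue H w)"
  define R0 where "R0 = (\<Sum>w\<in>P. norm w) + 1"
  have inP: "norm w < r" if "w \<in> P" "R0 \<le> r" for w r
  proof -
    have "norm w \<le> (\<Sum>w\<in>P. norm w)" using finP that(1) by (intro member_le_sum) auto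
    then show ?thesis using that(2) unfolding R0_def by simp
  qed
  have R0pos: "0 < R0" unfolding R0_def by (simp add: sum_nonneg add_nonneg_pos)
  have pim: "path_image (circlepath 0 r) \<subseteq> UNIV - P" if "R0 \<le> r" for r
  proof -
    have "0 \<le> r" using R0pos that by simp
    then have "path_image (circlepath 0 r) = sphere 0 r" by (rule path_image_circlepath_nonneg)
    then show ?thesis using inP[OF _ that] by fastforce
  qed
  have intK: "(H has_contour_integral (2 * pi * \<i> * K)) (circlepath 0 r)" if r: "R0 \<le> r" for r
  proof -
    have ci: "contour_integral (circlepath 0 r) H = 2 * pi * \<i> * (\<Sum>w\<in>P. winding_number (circlepath 0 r) w * residue H w)"
      by (rule Residue_theorem[of UNIV P H]) (use finP holo pim[OF r] in auto)
    have "(\<Sum>w\<in>P. winding_number (circlepath 0 r) w * residue H w) = K"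
      unfolding K_def using inP[OF _ r] by (intro sum.cong refl) (simp add: winding_number_circlepath)
    moreover have "H contour_integrable_on (circlepath 0 r)"
      using finP holo pim[OF r] by (intro contour_integrable_holomorphic_simple[of H "UNIV - P"])
        (auto simp: finite_imp_closed open_Diff)
    ultimately show ?thesis using ci has_contour_integral_integral by metis
  qed
  have "norm (K - c) \<le> e" if e: "e > 0" for e
  proof -
    have "eventually (\<lambda>t. dist (t * (H t - poly p t)) c < e) at_infinity"
      using lim e by (rule tendstoD)
    then obtain b where b: "\<And>t. b \<le> norm t \<Longrightarrow> norm (t * (H t - poly p t) - c) < e"
      unfolding eventually_at_infinity dist_norm by blast
    define r where "r = max R0 b"
    have r: "R0 \<le> r" "b \<le> r" "0 < r" using R0pos by (auto simp: r_def)
    have i1: "(H has_contour_integral (2 * pi * \<i> * K)) (circlepath 0 r)" by (rule intK[OF r(1)])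
    have i2: "(poly p has_contour_integral 0) (circlepath 0 r)"
      by (rule Cauchy_theorem_convex_simple[OF poly_holo convex_UNIV]) auto
    have i3: "((\<lambda>u. c / (u - 0)) has_contour_integral (2 * of_real pi * \<i> * c)) (circlepath 0 r)"
      using Cauchy_integral_circlepath_simple[of "\<lambda>_. c" 0 r 0] r(3) by simp
    have i4: "((\<lambda>u. H u - poly p u - c / (u - 0)) has_contour_integral (2 * pi * \<i> * K - 0 - 2 * of_real pi * \<i> * c)) (circlepath 0 r)"
      by (intro has_contour_integral_diff i1 i2 i3)
    have bnd: "norm (H x - poly p x - c / (x - 0)) \<le> e / r" if "norm (x - 0) = r" for x
    proof -
      have nx: "norm x = r" using that by simp
      then have x0: "x \<noteq> 0" using r(3) by auto
      have "H x - poly p x - c / (x - 0) = (x * (H x - poly p x) - c) / x"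
        using x0 by (simp add: field_simps)
      then have "norm (H x - poly p x - c / (x - 0)) = norm (x * (H x - poly p x) - c) / r"
        by (simp add: norm_divide nx)
      also have "\<dots> \<le> e / r" using b[of x] nx r(2) r(3) by (simp add: divide_right_mono)
      finally show ?thesis .
    qed
    have "norm (2 * pi * \<i> * K - 0 - 2 * of_real pi * \<i> * c) \<le> e / r * (2 * pi * r)"
      by (rule has_contour_integral_bound_circlepath[OF i4 _ r(3) bnd]) (use e r in simp)
    moreover have "norm (2 * pi * \<i> * K - 0 - 2 * of_real pi * \<i> * c) = 2 * pi * norm (K - c)"
    proof -
      have "2 * pi * \<i> * K - 0 - 2 * of_real pi * \<i> * c = (2 * pi * \<i>) * (K - c)" by (simp add: algebra_simps)
      then show ?thesis by (simp add: norm_mult)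
    qed
    moreover have "e / r * (2 * pi * r) = 2 * pi * e" using r(3) by simp
    ultimately show ?thesis by simp
  qed
  then have "K - c = 0" by (intro small_zero) auto
  then show ?thesis unfolding K_def by simp
qed

theorem lemma3p3:
  fixes \<alpha> :: "nat \<Rightarrow> real" and f :: "nat \<Rightarrow> complex \<Rightarrow> complex"
  assumes "\<forall>i<5. 0 \<le> \<alpha> i \<and> \<alpha> i \<le> 1"
    and "(\<Sum>i<5. \<alpha> i) = 1"
    and "A4_rational_solution \<alpha> f"
  shows "Im (laurent_inf_coeff_m1 (A4_H f)) = 0 \<and> Re (laurent_inf_coeff_m1 (A4_H f)) \<ge> 0"
proof -
  have pos: "\<forall>i<5. 0 \<le> \<alpha> i" using assms(1) by blast
  have rat: "\<forall>j<5. rational_fun (f j)" using assms(3) unfolding A4_rational_solution_def by blast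
  have "\<forall>j. \<exists>pq. j < 5 \<longrightarrow> snd pq \<noteq> 0 \<and> (\<forall>t. poly (snd pq) t \<noteq> 0 \<longrightarrow> f j t = poly (fst pq) t / poly (snd pq) t)"
    using rat unfolding rational_fun_def by fastforce
  then obtain PQ where PQ: "\<forall>j. j < 5 \<longrightarrow> snd (PQ j) \<noteq> 0 \<and> (\<forall>t. poly (snd (PQ j)) t \<noteq> 0 \<longrightarrow> f j t = poly (fst (PQ j)) t / poly (snd (PQ j)) t)"
    using choice[of "\<lambda>j pq. j < 5 \<longrightarrow> snd pq \<noteq> 0 \<and> (\<forall>t. poly (snd pq) t \<noteq> 0 \<longrightarrow> f j t = poly (fst pq) t / poly (snd pq) t)"] by blast
  define P where "P = (\<Union>j<5. {t. poly (snd (PQ j)) t = 0})"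
  have finP: "finite P" unfolding P_def using PQ by (intro finite_UN_I) (auto intro: poly_roots_finite)
  have fh: "f j holomorphic_on UNIV - P" if j: "j < 5" for j
  proof -
    have "(\<lambda>t. poly (fst (PQ j)) t / poly (snd (PQ j)) t) holomorphic_on UNIV - P"
      using j by (intro holomorphic_on_divide poly_holo) (auto simp: P_def)
    moreover have "\<forall>t \<in> UNIV - P. poly (fst (PQ j)) t / poly (snd (PQ j)) t = f j t"
      using PQ j by (auto simp: P_def)
    ultimately show ?thesis using holomorphic_transform by blast
  qed
  have Heq: "A4_H f = (\<lambda>t. \<Sum>j<5. f j t * f ((j+1) mod 5) t * f ((j+2) mod 5) t)"
    by (rule ext) (simp add: A4_H_def)
  have holo: "A4_H f holomorphic_on UNIV - P"
    unfolding Heq by (intro holomorphic_on_sum holomorphic_on_mult fh) auto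
  have "ratinf (A4_H f)"
    unfolding Heq by (intro ratinf_sum ratinf_mult ratinf_rat rat[rule_format]) auto
  then obtain p c where lim: "((\<lambda>t. t * (A4_H f t - poly p t)) \<longlongrightarrow> c) at_infinity"
    using ratinf_lim by blast
  have lc: "laurent_inf_coeff_m1 (A4_H f) = c" by (rule laurent_eq[OF lim])
  have cs: "c = (\<Sum>w\<in>P. residue (A4_H f) w)" by (rule res_sum[OF holo finP lim])
  have rn: "Im (residue (A4_H f) w) = 0 \<and> 0 \<le> Re (residue (A4_H f) w)" for w
    by (rule residue_nonneg[OF pos assms(3)])
  show ?thesis unfolding lc cs using rn by (simp add: Im_sum Re_sum sum_nonneg)
qed

end
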